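(* Let $X,Y$ be compact metric spaces, $\epsilon\ge0$, and let $X_\epsilon\subseteq X$, $Y_\epsilon\subseteq Y$ be $\epsilon$-nets of $X$ and $Y$ respectively. Then $|d_{\mathrm{GH}}(X,Y)-d_{\mathrm{GH}}(X_\epsilon,Y_\epsilon)|\le\epsilon$ and $|\widehat{d}_{\mathrm{GH}}(X,Y)-\widehat{d}_{\mathrm{GH}}(X_\epsilon,Y_\epsilon)|\le\epsilon$.
   Context: $X_\epsilon\subseteq X$ is an $\epsilon$-net of $X$ if every point of $X$ is within distance $\le\epsilon$ of some point of $X_\epsilon$ (the nets are taken so that they are compact, e.g. finite). For $f:X\to Y$, $\operatorname{dis}(f)=\sup_{x,x'}|d_X(x,x')-d_Y(f(x),f(x'))|$; $\operatorname{codis}(f,g)=\sup_{x,y}|d_X(x,g(y))-d_Y(f(x),y)|$. $d_{\mathrm{GH}}$ is the Gromov--Hausdorff distance, equal to $\frac12\inf_{f,g}\max\{\operatorname{dis}(f),\operatorname{dis}(g),\operatorname{codis}(f,g)\}$; the modified Gromov--Hausdorff distance is $\widehat{d}_{\mathrm{GH}}(X,Y)=\frac12\max\{\inf_{f:X\to Y}\operatorname{dis}(f),\inf_{g:Y\to X}\operatorname{dis}(g)\}$. *)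

theory Defs
  imports "HOL-Analysis.Analysis"
begin

definition dis :: "'a set \<Rightarrow> ('a \<Rightarrow> 'a \<Rightarrow> real) \<Rightarrow> ('b \<Rightarrow> 'b \<Rightarrow> real) \<Rightarrow> ('a \<Rightarrow> 'b) \<Rightarrow> real" where
  "dis X dX dY f = (SUP p \<in> X \<times> X. \<bar>dX (fst p) (snd p) - dY (f (fst p)) (f (snd p))\<bar>)"

definition codis :: "'a set \<Rightarrow> ('a \<Rightarrow> 'a \<Rightarrow> real) \<Rightarrow> 'b set \<Rightarrow> ('b \<Rightarrow> 'b \<Rightarrow> real)
    \<Rightarrow> ('a \<Rightarrow> 'b) \<Rightarrow> ('b \<Rightarrow> 'a) \<Rightarrow> real" where
  "codis X dX Y dY f g = (SUP p \<in> X \<times> Y. \<bar>dX (fst p) (g (snd p)) - dY (f (fst p)) (snd p)\<bar>)"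

definition dGH :: "'a set \<Rightarrow> ('a \<Rightarrow> 'a \<Rightarrow> real) \<Rightarrow> 'b set \<Rightarrow> ('b \<Rightarrow> 'b \<Rightarrow> real) \<Rightarrow> real" where
  "dGH X dX Y dY = (1/2) * (INF fg \<in> (X \<rightarrow> Y) \<times> (Y \<rightarrow> X).
      max (dis X dX dY (fst fg)) (max (dis Y dY dX (snd fg)) (codis X dX Y dY (fst fg) (snd fg))))"

definition mdGH :: "'a set \<Rightarrow> ('a \<Rightarrow> 'a \<Rightarrow> real) \<Rightarrow> 'b set \<Rightarrow> ('b \<Rightarrow> 'b \<Rightarrow> real) \<Rightarrow> real" where
  "mdGH X dX Y dY = (1/2) * max (INF f \<in> X \<rightarrow> Y. dis X dX dY f) (INF g \<in> Y \<rightarrow> X. dis Y dY dX g)"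

definition is_eps_net :: "'a set \<Rightarrow> ('a \<Rightarrow> 'a \<Rightarrow> real) \<Rightarrow> real \<Rightarrow> 'a set \<Rightarrow> bool" where
  "is_eps_net X d \<epsilon> N \<longleftrightarrow> N \<subseteq> X \<and> (\<forall>x\<in>X. \<exists>y\<in>N. d x y \<le> \<epsilon>)"

end

theory Submission
  imports Defs
begin

lemma dis_upper:
  assumes KA: "\<forall>x\<in>A. \<forall>x'\<in>A. \<bar>dA x x'\<bar> \<le> K" and KB: "\<forall>y\<in>B. \<forall>y'\<in>B. \<bar>dB y y'\<bar> \<le> K"
    and f: "f \<in> A \<rightarrow> B" and x: "x \<in> A" "x' \<in> A"
  shows "\<bar>dA x x' - dB (f x) (f x')\<bar> \<le> dis A dA dB f"
  unfolding dis_def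
proof (rule cSUP_upper2[where x="(x,x')"])
  show "bdd_above ((\<lambda>p. \<bar>dA (fst p) (snd p) - dB (f (fst p)) (f (snd p))\<bar>) ` (A \<times> A))"
  proof (rule bdd_aboveI2[where M="2*K"])
    fix p assume "p \<in> A \<times> A"
    then have "\<bar>dA (fst p) (snd p)\<bar> \<le> K" "\<bar>dB (f (fst p)) (f (snd p))\<bar> \<le> K"
      using KA KB f by (auto simp: Pi_iff)
    then show "\<bar>dA (fst p) (snd p) - dB (f (fst p)) (f (snd p))\<bar> \<le> 2*K" by linarith
  qed
qed (use x in auto)

lemma codis_upper:
  assumes KA: "\<forall>x\<in>A. \<forall>x'\<in>A. \<bar>dA x x'\<bar> \<le> K" and KB: "\<forall>y\<in>B. \<forall>y'\<in>B. \<bar>dB y y'\<bar> \<le> K"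
    and f: "f \<in> A \<rightarrow> B" and g: "g \<in> B \<rightarrow> A" and x: "x \<in> A" "y \<in> B"
  shows "\<bar>dA x (g y) - dB (f x) y\<bar> \<le> codis A dA B dB f g"
  unfolding codis_def
proof (rule cSUP_upper2[where x="(x,y)"])
  show "bdd_above ((\<lambda>p. \<bar>dA (fst p) (g (snd p)) - dB (f (fst p)) (snd p)\<bar>) ` (A \<times> B))"
  proof (rule bdd_aboveI2[where M="2*K"])
    fix p assume "p \<in> A \<times> B"
    then have "\<bar>dA (fst p) (g (snd p))\<bar> \<le> K" "\<bar>dB (f (fst p)) (snd p)\<bar> \<le> K"
      using KA KB f g by (auto simp: Pi_iff)
    then show "\<bar>dA (fst p) (g (snd p)) - dB (f (fst p)) (snd p)\<bar> \<le> 2*K" by linarith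
  qed
qed (use x in auto)

lemma dis_least:
  assumes "A \<noteq> {}" and "\<And>x x'. x \<in> A \<Longrightarrow> x' \<in> A \<Longrightarrow> \<bar>dA x x' - dB (f x) (f x')\<bar> \<le> c"
  shows "dis A dA dB f \<le> c"
  unfolding dis_def using assms by (intro cSUP_least) auto

lemma codis_least:
  assumes "A \<noteq> {}" "B \<noteq> {}" and "\<And>x y. x \<in> A \<Longrightarrow> y \<in> B \<Longrightarrow> \<bar>dA x (g y) - dB (f x) y\<bar> \<le> c"
  shows "codis A dA B dB f g \<le> c"
  unfolding codis_def using assms by (intro cSUP_least) auto

lemma dis_nonneg:
  assumes "\<forall>x\<in>A. \<forall>x'\<in>A. \<bar>dA x x'\<bar> \<le> K" "\<forall>y\<in>B. \<forall>y'\<in>B. \<bar>dB y y'\<bar> \<le> K"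
    "f \<in> A \<rightarrow> B" "A \<noteq> {}"
  shows "0 \<le> dis A dA dB f"
proof -
  obtain x where "x \<in> A" using assms by auto
  from dis_upper[OF assms(1-3) this this] show ?thesis by linarith
qed

lemma codis_nonneg:
  assumes "\<forall>x\<in>A. \<forall>x'\<in>A. \<bar>dA x x'\<bar> \<le> K" "\<forall>y\<in>B. \<forall>y'\<in>B. \<bar>dB y y'\<bar> \<le> K"
    "f \<in> A \<rightarrow> B" "g \<in> B \<rightarrow> A" "A \<noteq> {}" "B \<noteq> {}"
  shows "0 \<le> codis A dA B dB f g"
proof -
  obtain x y where "x \<in> A" "y \<in> B" using assms by auto
  from codis_upper[OF assms(1-4) this] show ?thesis by linarith
qed

lemma bound_sub: "\<forall>x\<in>A. \<forall>x'\<in>A. \<bar>dA x x'\<bar> \<le> K \<Longrightarrow> A' \<subseteq> A \<Longrightarrow> \<forall>x\<in>A'. \<forall>x'\<in>A'. \<bar>dA x x'\<bar> \<le> K"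
  by blast

lemma (in Metric_space) quad: "a \<in> M \<Longrightarrow> b \<in> M \<Longrightarrow> a' \<in> M \<Longrightarrow> b' \<in> M \<Longrightarrow>
   \<bar>d a b - d a' b'\<bar> \<le> d a a' + d b b'"
  using triangle[of a a' b] triangle[of a' b' b] triangle[of a' a b'] triangle[of a b b'] commute[of b b'] commute[of a a']
  by (smt (verit))

lemma INF_transfer:
  fixes h k :: "'s \<Rightarrow> real"
  assumes "S \<noteq> {}" "\<And>t. t \<in> T \<Longrightarrow> 0 \<le> h t" "\<And>s. s \<in> S \<Longrightarrow> \<exists>t\<in>T. h t \<le> k s + c"
  shows "(INF t\<in>T. h t) \<le> (INF s\<in>S. k s) + c"
proof -
  have "(INF t\<in>T. h t) - c \<le> (INF s\<in>S. k s)"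
  proof (rule cINF_greatest[OF assms(1)])
    fix s assume "s \<in> S"
    then obtain t where t: "t \<in> T" "h t \<le> k s + c" using assms(3) by blast
    have "(INF t\<in>T. h t) \<le> h t"
      by (rule cINF_lower[OF _ t(1)]) (use assms(2) in \<open>force intro: bdd_belowI2[where m=0]\<close>)
    then show "(INF t\<in>T. h t) - c \<le> k s" using t by linarith
  qed
  then show ?thesis by linarith
qed


lemma dis_net1:
  assumes MB: "Metric_space B dB"
    and KA: "\<forall>x\<in>A. \<forall>x'\<in>A. \<bar>dA x x'\<bar> \<le> K" and KB: "\<forall>y\<in>B. \<forall>y'\<in>B. \<bar>dB y y'\<bar> \<le> K"
    and A': "A' \<subseteq> A" "A' \<noteq> {}"
    and q: "\<forall>y\<in>B. q y \<in> B \<and> dB y (q y) \<le> e"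
    and f: "f \<in> A \<rightarrow> B"
  shows "dis A' dA dB (q \<circ> f) \<le> dis A dA dB f + 2*e"
proof (rule dis_least[OF A'(2)])
  fix x x' assume x: "x \<in> A'" "x' \<in> A'"
  then have xA: "x \<in> A" "x' \<in> A" using A' by auto
  then have fx: "f x \<in> B" "f x' \<in> B" using f by auto
  have 1: "\<bar>dA x x' - dB (f x) (f x')\<bar> \<le> dis A dA dB f" by (rule dis_upper[OF KA KB f xA])
  have 2: "\<bar>dB (f x) (f x') - dB (q (f x)) (q (f x'))\<bar> \<le> dB (f x) (q (f x)) + dB (f x') (q (f x'))"
    using Metric_space.quad[OF MB] fx q by auto
  show "\<bar>dA x x' - dB ((q \<circ> f) x) ((q \<circ> f) x')\<bar> \<le> dis A dA dB f + 2 * e"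
  proof -
    have "dB (f x) (q (f x)) \<le> e" "dB (f x') (q (f x')) \<le> e" using q fx by auto
    then show ?thesis using 1 2 by simp
  qed
qed

lemma dis_net2:
  assumes MA: "Metric_space A dA"
    and KA: "\<forall>x\<in>A. \<forall>x'\<in>A. \<bar>dA x x'\<bar> \<le> K" and KB: "\<forall>y\<in>B. \<forall>y'\<in>B. \<bar>dB y y'\<bar> \<le> K"
    and A': "A' \<subseteq> A" and "A \<noteq> {}" and B': "B' \<subseteq> B"
    and p: "\<forall>x\<in>A. p x \<in> A' \<and> dA x (p x) \<le> e"
    and f: "f \<in> A' \<rightarrow> B'"
  shows "dis A dA dB (f \<circ> p) \<le> dis A' dA dB f + 2*e"
proof (rule dis_least[OF assms(5)])
  fix x x' assume xA: "x \<in> A" "x' \<in> A"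
  then have px: "p x \<in> A'" "p x' \<in> A'" using p by auto
  have 1: "\<bar>dA (p x) (p x') - dB (f (p x)) (f (p x'))\<bar> \<le> dis A' dA dB f"
    by (rule dis_upper[OF bound_sub[OF KA A'] bound_sub[OF KB B'] f px])
  have 2: "\<bar>dA x x' - dA (p x) (p x')\<bar> \<le> dA x (p x) + dA x' (p x')"
    using Metric_space.quad[OF MA] xA px A' by (meson subsetD)
  have "dA x (p x) \<le> e" "dA x' (p x') \<le> e" using p xA by auto
  then show "\<bar>dA x x' - dB ((f \<circ> p) x) ((f \<circ> p) x')\<bar> \<le> dis A' dA dB f + 2 * e"
    using 1 2 by simp
qed

lemma codis_net1:
  assumes MA: "Metric_space A dA" and MB: "Metric_space B dB"
    and KA: "\<forall>x\<in>A. \<forall>x'\<in>A. \<bar>dA x x'\<bar> \<le> K" and KB: "\<forall>y\<in>B. \<forall>y'\<in>B. \<bar>dB y y'\<bar> \<le> K"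
    and A': "A' \<subseteq> A" "A' \<noteq> {}" and B': "B' \<subseteq> B" "B' \<noteq> {}"
    and p: "\<forall>x\<in>A. p x \<in> A' \<and> dA x (p x) \<le> e"
    and q: "\<forall>y\<in>B. q y \<in> B' \<and> dB y (q y) \<le> e"
    and f: "f \<in> A \<rightarrow> B" and g: "g \<in> B \<rightarrow> A"
  shows "codis A' dA B' dB (q \<circ> f) (p \<circ> g) \<le> codis A dA B dB f g + 2*e"
proof (rule codis_least[OF A'(2) B'(2)])
  fix x y assume x: "x \<in> A'" "y \<in> B'"
  then have xA: "x \<in> A" "y \<in> B" using A' B' by auto
  then have fx: "f x \<in> B" "g y \<in> A" using f g by auto
  have 1: "\<bar>dA x (g y) - dB (f x) y\<bar> \<le> codis A dA B dB f g" by (rule codis_upper[OF KA KB f g xA])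
  have 2: "\<bar>dA x (g y) - dA x (p (g y))\<bar> \<le> dA x x + dA (g y) (p (g y))"
    using Metric_space.quad[OF MA] fx xA p A' by auto
  have 3: "\<bar>dB (f x) y - dB (q (f x)) y\<bar> \<le> dB (f x) (q (f x)) + dB y y"
    using Metric_space.quad[OF MB] fx xA q B' by auto
  have 4: "dA x x = 0" "dB y y = 0" using MA MB xA by (auto simp: Metric_space.zero)
  show "\<bar>dA x ((p \<circ> g) y) - dB ((q \<circ> f) x) y\<bar> \<le> codis A dA B dB f g + 2 * e"
    using 1 2 3 4 p q fx by force
qed

lemma codis_net2:
  assumes MA: "Metric_space A dA" and MB: "Metric_space B dB"
    and KA: "\<forall>x\<in>A. \<forall>x'\<in>A. \<bar>dA x x'\<bar> \<le> K" and KB: "\<forall>y\<in>B. \<forall>y'\<in>B. \<bar>dB y y'\<bar> \<le> K"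
    and A': "A' \<subseteq> A" "A \<noteq> {}" and B': "B' \<subseteq> B" "B \<noteq> {}"
    and p: "\<forall>x\<in>A. p x \<in> A' \<and> dA x (p x) \<le> e"
    and q: "\<forall>y\<in>B. q y \<in> B' \<and> dB y (q y) \<le> e"
    and f: "f \<in> A' \<rightarrow> B'" and g: "g \<in> B' \<rightarrow> A'"
  shows "codis A dA B dB (f \<circ> p) (g \<circ> q) \<le> codis A' dA B' dB f g + 2*e"
proof (rule codis_least[OF A'(2) B'(2)])
  fix x y assume xA: "x \<in> A" "y \<in> B"
  then have px: "p x \<in> A'" "q y \<in> B'" using p q by auto
  then have fx: "f (p x) \<in> B" "g (q y) \<in> A" using f g A' B' by auto
  have 1: "\<bar>dA (p x) (g (q y)) - dB (f (p x)) (q y)\<bar> \<le> codis A' dA B' dB f g"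
    by (rule codis_upper[OF bound_sub[OF KA A'(1)] bound_sub[OF KB B'(1)] f g px])
  have 2: "\<bar>dA x (g (q y)) - dA (p x) (g (q y))\<bar> \<le> dA x (p x) + dA (g (q y)) (g (q y))"
    using Metric_space.quad[OF MA] fx xA px A' by auto
  have 3: "\<bar>dB (f (p x)) y - dB (f (p x)) (q y)\<bar> \<le> dB (f (p x)) (f (p x)) + dB y (q y)"
    using Metric_space.quad[OF MB] fx xA px B' by auto
  have 4: "dA (g (q y)) (g (q y)) = 0" "dB (f (p x)) (f (p x)) = 0" using MA MB fx by (auto simp: Metric_space.zero)
  show "\<bar>dA x ((g \<circ> q) y) - dB ((f \<circ> p) x) y\<bar> \<le> codis A' dA B' dB f g + 2 * e"
    using 1 2 3 4 p q xA by force
qed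


lemma bound_of_compact:
  assumes "Metric_space X dX" "compact_space (Metric_space.mtopology X dX)"
  shows "\<exists>K. \<forall>x\<in>X. \<forall>x'\<in>X. \<bar>dX x x'\<bar> \<le> K"
proof -
  interpret Metric_space X dX by fact
  have "compactin mtopology X" using assms(2) by (simp add: compact_space_def)
  then have "mbounded X" by (rule compactin_imp_mbounded)
  then obtain B where "\<forall>x\<in>X. \<forall>y\<in>X. dX x y \<le> B" by (auto simp: mbounded_alt)
  then show ?thesis by auto
qed

theorem claim2:
  fixes X :: "'a set" and dX :: "'a \<Rightarrow> 'a \<Rightarrow> real"
    and Y :: "'b set" and dY :: "'b \<Rightarrow> 'b \<Rightarrow> real"
    and \<epsilon> :: real and Xe :: "'a set" and Ye :: "'b set"
  assumes "Metric_space X dX" and "Metric_space Y dY"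
    and "compact_space (Metric_space.mtopology X dX)"
    and "compact_space (Metric_space.mtopology Y dY)"
    and "X \<noteq> {}" and "Y \<noteq> {}"
    and "\<epsilon> \<ge> 0"
    and "is_eps_net X dX \<epsilon> Xe" and "is_eps_net Y dY \<epsilon> Ye"
    and "compactin (Metric_space.mtopology X dX) Xe"
    and "compactin (Metric_space.mtopology Y dY) Ye"
  shows "\<bar>dGH X dX Y dY - dGH Xe dX Ye dY\<bar> \<le> \<epsilon> \<and>
         \<bar>mdGH X dX Y dY - mdGH Xe dX Ye dY\<bar> \<le> \<epsilon>"
proof -
  note MX = assms(1) and MY = assms(2)
  obtain K1 where K1: "\<forall>x\<in>X. \<forall>x'\<in>X. \<bar>dX x x'\<bar> \<le> K1" using bound_of_compact[OF assms(1,3)] by blast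
  obtain K2 where K2: "\<forall>x\<in>Y. \<forall>x'\<in>Y. \<bar>dY x x'\<bar> \<le> K2" using bound_of_compact[OF assms(2,4)] by blast
  define K where "K = max K1 K2"
  have KX: "\<forall>x\<in>X. \<forall>x'\<in>X. \<bar>dX x x'\<bar> \<le> K" using K1 unfolding K_def by force
  have KY: "\<forall>x\<in>Y. \<forall>x'\<in>Y. \<bar>dY x x'\<bar> \<le> K" using K2 unfolding K_def by force
  have XeX: "Xe \<subseteq> X" and YeY: "Ye \<subseteq> Y" using assms(8,9) by (auto simp: is_eps_net_def)
  have "\<forall>x\<in>X. \<exists>y. y \<in> Xe \<and> dX x y \<le> \<epsilon>" using assms(8) by (auto simp: is_eps_net_def)
  then obtain p where p: "\<forall>x\<in>X. p x \<in> Xe \<and> dX x (p x) \<le> \<epsilon>" by metis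
  have "\<forall>x\<in>Y. \<exists>y. y \<in> Ye \<and> dY x y \<le> \<epsilon>" using assms(9) by (auto simp: is_eps_net_def)
  then obtain q where q: "\<forall>x\<in>Y. q x \<in> Ye \<and> dY x (q x) \<le> \<epsilon>" by metis
  have Xne: "Xe \<noteq> {}" using p assms(5) by blast
  have Yne: "Ye \<noteq> {}" using q assms(6) by blast
  have qY: "\<forall>y\<in>Y. q y \<in> Y \<and> dY y (q y) \<le> \<epsilon>" using q YeY by blast
  have pX: "\<forall>y\<in>X. p y \<in> X \<and> dX y (p y) \<le> \<epsilon>" using p XeX by blast
  have KXe: "\<forall>x\<in>Xe. \<forall>x'\<in>Xe. \<bar>dX x x'\<bar> \<le> K" using KX XeX by blast
  have KYe: "\<forall>x\<in>Ye. \<forall>x'\<in>Ye. \<bar>dY x x'\<bar> \<le> K" using KY YeY by blast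
  have PXY: "X \<rightarrow> Y \<noteq> {}" using assms(6) by (auto simp: Pi_iff)
  have PYX: "Y \<rightarrow> X \<noteq> {}" using assms(5) by (auto simp: Pi_iff)
  have PXYe: "Xe \<rightarrow> Ye \<noteq> {}" using Yne by (auto simp: Pi_iff)
  have PYXe: "Ye \<rightarrow> Xe \<noteq> {}" using Xne by (auto simp: Pi_iff)
  define H :: "'a set \<Rightarrow> ('a \<Rightarrow> 'a \<Rightarrow> real) \<Rightarrow> 'b set \<Rightarrow> ('b \<Rightarrow> 'b \<Rightarrow> real) \<Rightarrow> ('a \<Rightarrow> 'b) \<times> ('b \<Rightarrow> 'a) \<Rightarrow> real" where "H = (\<lambda>A dA B dB fg. max (dis A dA dB (fst fg)) (max (dis B dB dA (snd fg)) (codis A dA B dB (fst fg) (snd fg))))"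
  have H1: "(INF fg \<in> (Xe \<rightarrow> Ye) \<times> (Ye \<rightarrow> Xe). H Xe dX Ye dY fg) \<le> (INF fg \<in> (X \<rightarrow> Y) \<times> (Y \<rightarrow> X). H X dX Y dY fg) + 2*\<epsilon>"
  proof (rule INF_transfer)
    show "(X \<rightarrow> Y) \<times> (Y \<rightarrow> X) \<noteq> {}" using PXY PYX by blast
  next
    fix t assume "t \<in> (Xe \<rightarrow> Ye) \<times> (Ye \<rightarrow> Xe)"
    then show "0 \<le> H Xe dX Ye dY t" unfolding H_def
      using dis_nonneg[OF KXe KYe _ Xne, of "fst t"] by (auto simp: mem_Times_iff)
  next
    fix s assume s: "s \<in> (X \<rightarrow> Y) \<times> (Y \<rightarrow> X)"
    obtain f g where fg: "s = (f, g)" "f \<in> X \<rightarrow> Y" "g \<in> Y \<rightarrow> X" using s by auto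
    have t: "(q \<circ> f, p \<circ> g) \<in> (Xe \<rightarrow> Ye) \<times> (Ye \<rightarrow> Xe)" using fg q p XeX YeY by (auto simp: Pi_iff)
    have a: "dis Xe dX dY (q \<circ> f) \<le> dis X dX dY f + 2*\<epsilon>"
      by (rule dis_net1[OF MY KX KY XeX Xne qY fg(2)])
    have b: "dis Ye dY dX (p \<circ> g) \<le> dis Y dY dX g + 2*\<epsilon>"
      by (rule dis_net1[OF MX KY KX YeY Yne pX fg(3)])
    have c: "codis Xe dX Ye dY (q \<circ> f) (p \<circ> g) \<le> codis X dX Y dY f g + 2*\<epsilon>"
      by (rule codis_net1[OF MX MY KX KY XeX Xne YeY Yne p q fg(2,3)])
    show "\<exists>t\<in>(Xe \<rightarrow> Ye) \<times> (Ye \<rightarrow> Xe). H Xe dX Ye dY t \<le> H X dX Y dY s + 2 * \<epsilon>"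
      using t a b c fg(1) unfolding H_def by (intro bexI[OF _ t]) auto
  qed
  have H2: "(INF fg \<in> (X \<rightarrow> Y) \<times> (Y \<rightarrow> X). H X dX Y dY fg) \<le> (INF fg \<in> (Xe \<rightarrow> Ye) \<times> (Ye \<rightarrow> Xe). H Xe dX Ye dY fg) + 2*\<epsilon>"
  proof (rule INF_transfer)
    show "(Xe \<rightarrow> Ye) \<times> (Ye \<rightarrow> Xe) \<noteq> {}" using PXYe PYXe by blast
  next
    fix t assume "t \<in> (X \<rightarrow> Y) \<times> (Y \<rightarrow> X)"
    then show "0 \<le> H X dX Y dY t" unfolding H_def
      using dis_nonneg[OF KX KY _ assms(5), of "fst t"] by (auto simp: mem_Times_iff)
  next
    fix s assume s: "s \<in> (Xe \<rightarrow> Ye) \<times> (Ye \<rightarrow> Xe)"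
    obtain f g where fg: "s = (f, g)" "f \<in> Xe \<rightarrow> Ye" "g \<in> Ye \<rightarrow> Xe" using s by auto
    have t: "(f \<circ> p, g \<circ> q) \<in> (X \<rightarrow> Y) \<times> (Y \<rightarrow> X)" using fg q p XeX YeY by (auto simp: Pi_iff)
    have a: "dis X dX dY (f \<circ> p) \<le> dis Xe dX dY f + 2*\<epsilon>"
      by (rule dis_net2[OF MX KX KY XeX assms(5) YeY p fg(2)])
    have b: "dis Y dY dX (g \<circ> q) \<le> dis Ye dY dX g + 2*\<epsilon>"
      by (rule dis_net2[OF MY KY KX YeY assms(6) XeX q fg(3)])
    have c: "codis X dX Y dY (f \<circ> p) (g \<circ> q) \<le> codis Xe dX Ye dY f g + 2*\<epsilon>"
      by (rule codis_net2[OF MX MY KX KY XeX assms(5) YeY assms(6) p q fg(2,3)])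
    show "\<exists>t\<in>(X \<rightarrow> Y) \<times> (Y \<rightarrow> X). H X dX Y dY t \<le> H Xe dX Ye dY s + 2 * \<epsilon>"
      using t a b c fg(1) unfolding H_def by (intro bexI[OF _ t]) auto
  qed
  have G: "dGH A dA B dB = (1/2) * (INF fg \<in> (A \<rightarrow> B) \<times> (B \<rightarrow> A). H A dA B dB fg)" for A dA B dB
    unfolding dGH_def H_def ..
  have part1: "\<bar>dGH X dX Y dY - dGH Xe dX Ye dY\<bar> \<le> \<epsilon>"
    unfolding G using H1 H2 by linarith
  have M1: "(INF f \<in> Xe \<rightarrow> Ye. dis Xe dX dY f) \<le> (INF f \<in> X \<rightarrow> Y. dis X dX dY f) + 2*\<epsilon>"
  proof (rule INF_transfer[OF PXY])
    fix t assume "t \<in> Xe \<rightarrow> Ye" then show "0 \<le> dis Xe dX dY t" using dis_nonneg[OF KXe KYe _ Xne] by blast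
  next
    fix f assume f: "f \<in> X \<rightarrow> Y"
    have "q \<circ> f \<in> Xe \<rightarrow> Ye" using f q XeX by (auto simp: Pi_iff)
    then show "\<exists>t\<in>Xe \<rightarrow> Ye. dis Xe dX dY t \<le> dis X dX dY f + 2 * \<epsilon>"
      using dis_net1[OF MY KX KY XeX Xne qY f] by blast
  qed
  have M2: "(INF f \<in> Ye \<rightarrow> Xe. dis Ye dY dX f) \<le> (INF f \<in> Y \<rightarrow> X. dis Y dY dX f) + 2*\<epsilon>"
  proof (rule INF_transfer[OF PYX])
    fix t assume "t \<in> Ye \<rightarrow> Xe" then show "0 \<le> dis Ye dY dX t" using dis_nonneg[OF KYe KXe _ Yne] by blast
  next
    fix f assume f: "f \<in> Y \<rightarrow> X"
    have "p \<circ> f \<in> Ye \<rightarrow> Xe" using f p YeY by (auto simp: Pi_iff)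
    then show "\<exists>t\<in>Ye \<rightarrow> Xe. dis Ye dY dX t \<le> dis Y dY dX f + 2 * \<epsilon>"
      using dis_net1[OF MX KY KX YeY Yne pX f] by blast
  qed
  have M3: "(INF f \<in> X \<rightarrow> Y. dis X dX dY f) \<le> (INF f \<in> Xe \<rightarrow> Ye. dis Xe dX dY f) + 2*\<epsilon>"
  proof (rule INF_transfer[OF PXYe])
    fix t assume "t \<in> X \<rightarrow> Y" then show "0 \<le> dis X dX dY t" using dis_nonneg[OF KX KY _ assms(5)] by blast
  next
    fix f assume f: "f \<in> Xe \<rightarrow> Ye"
    have "f \<circ> p \<in> X \<rightarrow> Y" using f p YeY by (auto simp: Pi_iff)
    then show "\<exists>t\<in>X \<rightarrow> Y. dis X dX dY t \<le> dis Xe dX dY f + 2 * \<epsilon>"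
      using dis_net2[OF MX KX KY XeX assms(5) YeY p f] by blast
  qed
  have M4: "(INF f \<in> Y \<rightarrow> X. dis Y dY dX f) \<le> (INF f \<in> Ye \<rightarrow> Xe. dis Ye dY dX f) + 2*\<epsilon>"
  proof (rule INF_transfer[OF PYXe])
    fix t assume "t \<in> Y \<rightarrow> X" then show "0 \<le> dis Y dY dX t" using dis_nonneg[OF KY KX _ assms(6)] by blast
  next
    fix f assume f: "f \<in> Ye \<rightarrow> Xe"
    have "f \<circ> q \<in> Y \<rightarrow> X" using f q XeX by (auto simp: Pi_iff)
    then show "\<exists>t\<in>Y \<rightarrow> X. dis Y dY dX t \<le> dis Ye dY dX f + 2 * \<epsilon>"
      using dis_net2[OF MY KY KX YeY assms(6) XeX q f] by blast
  qed
  have part2: "\<bar>mdGH X dX Y dY - mdGH Xe dX Ye dY\<bar> \<le> \<epsilon>"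
    unfolding mdGH_def using M1 M2 M3 M4 by (simp add: max_def abs_le_iff)
  show ?thesis using part1 part2 by blast
qed

end
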